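(* For $\mathbf{x}=(x_1,\dots,x_N)^{\mathrm T}\in\mathbb{R}^N$ define $$\ell_{\mathrm{bbin}}(\mathbf{x})=N\sum_{n=1}^N\frac{1}{(1+x_n^2)^2}-\Big(\sum_{n=1}^N\frac{1}{1+x_n^2}\Big)^2.$$ Then $\ell_{\mathrm{bbin}}(\mathbf{x})\ge0$ for all $\mathbf{x}$, and $\ell_{\mathrm{bbin}}(\mathbf{x})=0$ if and only if $\mathbf{x}\in\{-\alpha,\alpha\}^N$ for some $\alpha\in\mathbb{R}$. Furthermore, $\ell_{\mathrm{bbin}}$ has no spurious stationary points: $\nabla\ell_{\mathrm{bbin}}(\mathbf{x})=\mathbf{0}$ holds only if $\mathbf{x}\in\{-\alpha,\alpha\}^N$ for some $\alpha\in\mathbb{R}$.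
   Context: A spurious stationary point of a differentiable function $\ell$ whose zero set is $\mathcal{X}$ is a point $\mathbf{x}\notin\mathcal{X}$ with $\nabla\ell(\mathbf{x})=\mathbf{0}$. *)

theory Defs
  imports "HOL-Analysis.Analysis"
begin

definition l_bbin :: "real ^ 'n \<Rightarrow> real" where
  "l_bbin x = real CARD('n) * (\<Sum>n\<in>UNIV. 1 / (1 + (x $ n)\<^sup>2)\<^sup>2)
              - (\<Sum>n\<in>UNIV. 1 / (1 + (x $ n)\<^sup>2))\<^sup>2"

end

theory Submission
  imports Defs
begin

lemma d1: "((\<lambda>t::real. 1 / (1 + t\<^sup>2)) has_real_derivative (- 2 * t / (1 + t\<^sup>2)\<^sup>2)) (at t)"
proof -
  have "0 < 1 + t\<^sup>2" by (simp add: add_pos_nonneg)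
  then show ?thesis
    apply -
    apply (rule derivative_eq_intros refl | simp)+
    apply (simp add: field_simps power2_eq_square)
    done
qed

lemma d2: "((\<lambda>t::real. 1 / (1 + t\<^sup>2)\<^sup>2) has_real_derivative (- 4 * t / (1 + t\<^sup>2)^3)) (at t)"
proof -
  have p: "0 < 1 + t\<^sup>2" by (simp add: add_pos_nonneg)
  have "((\<lambda>t. (1/(1+t\<^sup>2))^2) has_real_derivative (of_nat 2 * ((- 2 * t / (1 + t\<^sup>2)\<^sup>2) * (1/(1+t\<^sup>2))^(2 - Suc 0)))) (at t)"
    by (rule DERIV_power[OF d1])
  moreover have "(\<lambda>t::real. (1/(1+t\<^sup>2))^2) = (\<lambda>t. 1 / (1 + t\<^sup>2)\<^sup>2)"
    by (simp add: power_one_over)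
  moreover have "(of_nat 2 * ((- 2 * t / (1 + t\<^sup>2)\<^sup>2) * (1/(1+t\<^sup>2))^(2 - Suc 0))) = - 4 * t / (1 + t\<^sup>2)^3"
    using p by (simp add: field_simps eval_nat_numeral)
  ultimately show ?thesis by metis
qed

lemma comp:
  fixes x :: "real ^ 'n"
  assumes "(g has_real_derivative D) (at (x $ n))"
  shows "((\<lambda>x. g (x $ n)) has_derivative (\<lambda>h. D * h $ n)) (at x)"
proof -
  have "((\<lambda>x. x $ n) has_derivative (\<lambda>h. h $ n)) (at x)"
    by (rule bounded_linear_imp_has_derivative[OF bounded_linear_vec_nth])
  from has_derivative_compose[OF this assms[unfolded has_field_derivative_def]]
  show ?thesis by simp
qed

lemma dl:
  fixes x :: "real ^ 'n"
  shows "(l_bbin has_derivative (\<lambda>h. real CARD('n) * (\<Sum>n\<in>UNIV. (- 4 * x$n / (1 + (x$n)\<^sup>2)^3) * h$n)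
     - 2 * (\<Sum>n\<in>UNIV. 1 / (1 + (x $ n)\<^sup>2)) * (\<Sum>n\<in>UNIV. (- 2 * x$n / (1 + (x$n)\<^sup>2)\<^sup>2) * h$n))) (at x)"
proof -
  have A: "((\<lambda>x. \<Sum>n\<in>UNIV. 1 / (1 + (x $ n)\<^sup>2)) has_derivative (\<lambda>h. \<Sum>n\<in>UNIV. (- 2 * x$n / (1 + (x$n)\<^sup>2)\<^sup>2) * h$n)) (at x)"
    by (rule has_derivative_sum, rule comp[OF d1])
  have B: "((\<lambda>x. \<Sum>n\<in>UNIV. 1 / (1 + (x $ n)\<^sup>2)\<^sup>2) has_derivative (\<lambda>h. \<Sum>n\<in>UNIV. (- 4 * x$n / (1 + (x$n)\<^sup>2)^3) * h$n)) (at x)"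
    by (rule has_derivative_sum, rule comp[OF d2])
  show ?thesis
    unfolding l_bbin_def[abs_def]
    apply (rule has_derivative_eq_rhs[OF has_derivative_diff[OF has_derivative_mult_right[OF B] has_derivative_power[OF A]]])
    apply (auto simp: fun_eq_iff algebra_simps)
    done
qed

lemma ident:
  fixes x :: "real ^ 'n"
  defines "y \<equiv> \<lambda>n. 1 / (1 + (x $ n)\<^sup>2)"
  shows "2 * l_bbin x = (\<Sum>i\<in>UNIV. \<Sum>j\<in>UNIV. (y i - y j)\<^sup>2)"
proof -
  have q: "(\<Sum>n\<in>UNIV. 1 / (1 + (x $ n)\<^sup>2)\<^sup>2) = (\<Sum>n\<in>UNIV. (y n)\<^sup>2)"
    unfolding y_def by (simp add: power_one_over)
  have "(\<Sum>i\<in>UNIV. \<Sum>j\<in>UNIV. (y i - y j)\<^sup>2)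
      = (\<Sum>i\<in>UNIV. \<Sum>j\<in>UNIV. (y i)\<^sup>2 + (y j)\<^sup>2 - 2 * (y i * y j))"
    by (simp add: power2_diff mult.assoc)
  also have "\<dots> = (\<Sum>i\<in>UNIV. real CARD('n) * (y i)\<^sup>2 + (\<Sum>n\<in>UNIV. (y n)\<^sup>2) - 2 * y i * (\<Sum>n\<in>UNIV. y n))"
    by (intro sum.cong refl) (simp add: sum.distrib sum_subtractf sum_distrib_left mult.assoc)
  also have "\<dots> = 2 * real CARD('n) * (\<Sum>n\<in>UNIV. (y n)\<^sup>2) - 2 * (\<Sum>n\<in>UNIV. y n)\<^sup>2"
    by (simp add: sum.distrib sum_subtractf sum_distrib_left[symmetric] sum_distrib_right[symmetric] power2_eq_square)
  finally show ?thesis unfolding l_bbin_def q y_def by simp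
qed

lemma alpha_of:
  fixes x :: "real ^ 'n"
  assumes "\<forall>i j. 1 / (1 + (x $ i)\<^sup>2) = 1 / (1 + (x $ j)\<^sup>2)"
  shows "\<exists>\<alpha>::real. \<forall>i. x $ i = \<alpha> \<or> x $ i = - \<alpha>"
proof -
  obtain k :: 'n where True by blast
  have "\<forall>i. (x $ i)\<^sup>2 = (x $ k)\<^sup>2"
  proof
    fix i
    have "1 / (1 + (x $ i)\<^sup>2) = 1 / (1 + (x $ k)\<^sup>2)" using assms by blast
    moreover have "0 < 1 + (x $ i)\<^sup>2" "0 < 1 + (x $ k)\<^sup>2" by (simp_all add: add_pos_nonneg)
    ultimately show "(x $ i)\<^sup>2 = (x $ k)\<^sup>2" by (simp add: field_simps)
  qed
  then show ?thesis by (metis power2_eq_iff)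
qed

theorem mainTheorem10:
  fixes x :: "real ^ 'n"
  shows "l_bbin x \<ge> 0
    \<and> (l_bbin x = 0 \<longleftrightarrow> (\<exists>\<alpha>::real. \<forall>i. x $ i = \<alpha> \<or> x $ i = - \<alpha>))
    \<and> ((GDERIV l_bbin x :> 0) \<longrightarrow> (\<exists>\<alpha>::real. \<forall>i. x $ i = \<alpha> \<or> x $ i = - \<alpha>))"
proof -
  define y where "y \<equiv> \<lambda>n. 1 / (1 + (x $ n)\<^sup>2)"
  have id: "2 * l_bbin x = (\<Sum>i\<in>UNIV. \<Sum>j\<in>UNIV. (y i - y j)\<^sup>2)"
    unfolding y_def by (rule ident)
  have nn: "0 \<le> (\<Sum>i\<in>UNIV. \<Sum>j\<in>UNIV. (y i - y j)\<^sup>2)"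
    by (intro sum_nonneg) simp
  have P1: "l_bbin x \<ge> 0" using id nn by linarith
  have P2: "l_bbin x = 0 \<longleftrightarrow> (\<exists>\<alpha>::real. \<forall>i. x $ i = \<alpha> \<or> x $ i = - \<alpha>)"
  proof
    assume "l_bbin x = 0"
    then have "(\<Sum>i\<in>UNIV. \<Sum>j\<in>UNIV. (y i - y j)\<^sup>2) = 0" using id by simp
    then have "\<forall>i. (\<Sum>j\<in>UNIV. (y i - y j)\<^sup>2) = 0"
      by (subst (asm) sum_nonneg_eq_0_iff) (auto intro: sum_nonneg)
    then have "\<forall>i j. (y i - y j)\<^sup>2 = 0"
      by (subst (asm) sum_nonneg_eq_0_iff) auto
    then have "\<forall>i j. y i = y j" by simp
    then show "\<exists>\<alpha>::real. \<forall>i. x $ i = \<alpha> \<or> x $ i = - \<alpha>"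
      by (intro alpha_of) (simp add: y_def)
  next
    assume "\<exists>\<alpha>::real. \<forall>i. x $ i = \<alpha> \<or> x $ i = - \<alpha>"
    then obtain \<alpha> :: real where a: "\<forall>i. x $ i = \<alpha> \<or> x $ i = - \<alpha>" by blast
    have "\<forall>i. y i = 1 / (1 + \<alpha>\<^sup>2)"
      using a unfolding y_def by (metis power2_minus)
    then have "(\<Sum>i\<in>UNIV. \<Sum>j\<in>UNIV. (y i - y j)\<^sup>2) = 0" by simp
    then show "l_bbin x = 0" using id by simp
  qed
  have P3: "(GDERIV l_bbin x :> 0) \<longrightarrow> (\<exists>\<alpha>::real. \<forall>i. x $ i = \<alpha> \<or> x $ i = - \<alpha>)"
  proof
    assume "GDERIV l_bbin x :> 0"
    then have z: "(l_bbin has_derivative (\<lambda>h. 0)) (at x)"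
      by (simp add: gderiv_def)
    let ?S = "\<Sum>n\<in>UNIV. 1 / (1 + (x $ n)\<^sup>2)"
    let ?N = "real CARD('n)"
    have e: "(\<lambda>h. ?N * (\<Sum>n\<in>UNIV. (- 4 * x$n / (1 + (x$n)\<^sup>2)^3) * h$n)
     - 2 * ?S * (\<Sum>n\<in>UNIV. (- 2 * x$n / (1 + (x$n)\<^sup>2)\<^sup>2) * h$n)) = (\<lambda>h. 0)"
      using has_derivative_unique[OF dl z] .
    have ax: "\<And>c k. (\<Sum>n\<in>UNIV. c n * (axis k (1::real) :: real ^ 'n) $ n) = c k"
      by (simp add: axis_def if_distrib[of "\<lambda>t. _ * t"] sum.delta cong: if_cong)
    have st: "x $ k = 0 \<or> ?N * y k = ?S" for k
    proof -
      have "?N * (- 4 * x$k / (1 + (x$k)\<^sup>2)^3) - 2 * ?S * (- 2 * x$k / (1 + (x$k)\<^sup>2)\<^sup>2) = 0"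
        using fun_cong[OF e, of "axis k 1"] by (simp only: ax)
      moreover have p: "0 < 1 + (x$k)\<^sup>2" by (simp add: add_pos_nonneg)
      moreover have "\<And>a::real. a > 0 \<Longrightarrow> ?N * (- 4 * x$k / a^3) - 2 * ?S * (- 2 * x$k / a\<^sup>2) = 4 * x$k / a^3 * (?S*a - ?N)"
        by (simp add: field_simps eval_nat_numeral)
      ultimately have "4 * x$k / (1 + (x$k)\<^sup>2)^3 * (?S * (1 + (x$k)\<^sup>2) - ?N) = 0"
        by metis
      then have "x $ k = 0 \<or> ?S * (1 + (x$k)\<^sup>2) = ?N" using p by simp
      then show ?thesis using p unfolding y_def by (auto simp: field_simps)
    qed
    have Npos: "?N > 0" by simp
    define m where "m = ?S / ?N"
    have ym: "x $ k = 0 \<or> y k = m" for k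
      using st[of k] Npos unfolding m_def by (auto simp: field_simps)
    have sum0: "(\<Sum>j\<in>UNIV. y j - m) = 0"
      using Npos unfolding m_def y_def by (simp add: sum_subtractf)
    have all: "\<forall>k. y k = m"
    proof (rule ccontr)
      assume "\<not> (\<forall>k. y k = m)"
      then obtain k where k: "y k \<noteq> m" by blast
      then have xk: "x $ k = 0" using ym by blast
      then have yk: "y k = 1" unfolding y_def by simp
      have yj: "y j = m \<or> y j = 1" for j using ym[of j] unfolding y_def by auto
      show False
      proof (cases "m < 1")
        case True
        have "0 < (\<Sum>j\<in>UNIV. y j - m)"
          by (rule sum_pos2[of UNIV k]) (use True yk yj in auto, metis diff_ge_0_iff_ge less_eq_real_def order_refl)
        then show False using sum0 by simp
      next
        case False
        then have "m > 1" using k yk by auto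
        have "(\<Sum>j\<in>UNIV. y j - m) < 0"
        proof -
          have "0 < (\<Sum>j\<in>UNIV. m - y j)"
            by (rule sum_pos2[of UNIV k]) (use \<open>m > 1\<close> yk yj in auto, metis less_eq_real_def diff_ge_0_iff_ge order_refl)
          then show ?thesis by (simp add: sum_subtractf)
        qed
        then show False using sum0 by simp
      qed
    qed
    then have "\<forall>i j. y i = y j" by simp
    then show "\<exists>\<alpha>::real. \<forall>i. x $ i = \<alpha> \<or> x $ i = - \<alpha>"
      by (intro alpha_of) (simp add: y_def)
  qed
  show ?thesis using P1 P2 P3 by blast
qed

end
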